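(* In the setting described in the context, assume $\varphi_2^{(\tau)}=\dots=\varphi_{n-1}^{(\tau)}=0$ for all $\tau\in T$ and that each $\varphi_1^{(\tau)}$ depends only on $x_n$ and is a group homomorphism $U_n/U_{n-1}\to U_1$ (i.e. $x_n\mapsto\varphi_1^{(\tau)}(x_n)$ is additive). Then there exists a bi-regular section $\sigma:U_n/U_{n-1}\to U_n$ of the projection $U_n\to U_n/U_{n-1}$ of the form $\sigma(x_nU_{n-1})=(f(x_n),0,\dots,0,x_n)$ with $f\in\mathsf k[\mathrm T]$ additive (i.e. $\delta^1(f)=0$, where $\delta^1(f)(x,y)=f(x)+f(y)-f(x+y)$), such that $\sigma(U_n/U_{n-1})$ is invariant under $T$.
   Context: Let $\mathsf k$ be an algebraically closed field and $G=U\rtimes T$ the semidirect product of an $n$-dimensional connected unipotent algebraic group $U$ by a $1$-dimensional connected torus $T$. Assume $U$ is identified with the affine space $\mathsf k^n$ so that: the subsets $U_i=\{(x_1,\dots,x_n): x_{i+1}=\dots=x_n=0\}$ ($0\le i\le n$) are normal subgroups of $G$; the product is $(x_1,\dots,x_n)(y_1,\dots,y_n)=(x_1+y_1+\psi_1,\ \dots,\ x_{n-1}+y_{n-1}+\psi_{n-1},\ x_n+y_n)$ where $\psi_j\in\mathsf k[x_{j+1},\dots,x_n,y_{j+1},\dots,y_n]$; and each $\tau\in T$ acts on $U$ by the automorphism $(x_1,\dots,x_n)\mapsto(a_\tau^{e_1}x_1+\varphi_1^{(\tau)}(x_2,\dots,x_n),\ \dots,\ a_\tau^{e_{n-1}}x_{n-1}+\varphi^{(\tau)}_{n-1}(x_n),\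 a_\tau^{e_n}x_n)$, where $a_\tau\in\mathsf k^*$ depends bi-regularly on $\tau$, each $\varphi^{(\tau)}_j$ is a morphism (polynomial in $x_{j+1},\dots,x_n$), and the $e_j$ are fixed integers. $U_n/U_{n-1}$ is identified with $\mathsf k$ via the coordinate $x_n$. *)

theory Defs
  imports "HOL-Algebra.Coset" "HOL-Computational_Algebra.Polynomial"
begin

inductive poly_fun :: "'v set \<Rightarrow> (('v \<Rightarrow> 'k::comm_ring_1) \<Rightarrow> 'k) \<Rightarrow> bool" for V where
  pf_const: "poly_fun V (\<lambda>_. c)"
| pf_var: "v \<in> V \<Longrightarrow> poly_fun V (\<lambda>z. z v)"
| pf_add: "poly_fun V p \<Longrightarrow> poly_fun V q \<Longrightarrow> poly_fun V (\<lambda>z. p z + q z)"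
| pf_mult: "poly_fun V p \<Longrightarrow> poly_fun V q \<Longrightarrow> poly_fun V (\<lambda>z. p z * q z)"

text \<open>U = k^n: points are functions nat => k supported on {1..n}.\<close>
definition Uset :: "nat \<Rightarrow> (nat \<Rightarrow> 'k::field) set" where
  "Uset n = {x. \<forall>i. (i = 0 \<or> n < i) \<longrightarrow> x i = 0}"

definition Usub :: "nat \<Rightarrow> nat \<Rightarrow> (nat \<Rightarrow> 'k::field) set" where
  "Usub n i = {x \<in> Uset n. \<forall>j. i < j \<longrightarrow> x j = 0}"

definition Umult :: "nat \<Rightarrow> (nat \<Rightarrow> (nat \<Rightarrow> 'k) \<Rightarrow> (nat \<Rightarrow> 'k) \<Rightarrow> 'k)
    \<Rightarrow> (nat \<Rightarrow> 'k::field) \<Rightarrow> (nat \<Rightarrow> 'k) \<Rightarrow> (nat \<Rightarrow> 'k)" where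
  "Umult n \<psi> x y = (\<lambda>j. if 1 \<le> j \<and> j < n then x j + y j + \<psi> j x y
                        else if j = n then x j + y j else 0)"

definition Ugrp :: "nat \<Rightarrow> (nat \<Rightarrow> (nat \<Rightarrow> 'k) \<Rightarrow> (nat \<Rightarrow> 'k) \<Rightarrow> 'k) \<Rightarrow> (nat \<Rightarrow> 'k::field)
    \<Rightarrow> (nat \<Rightarrow> 'k) monoid" where
  "Ugrp n \<psi> e = \<lparr>carrier = Uset n, monoid.mult = Umult n \<psi>, one = e\<rparr>"

definition psi_poly :: "nat \<Rightarrow> nat \<Rightarrow> ((nat \<Rightarrow> 'k) \<Rightarrow> (nat \<Rightarrow> 'k) \<Rightarrow> 'k::field) \<Rightarrow> bool" where
  "psi_poly n j p \<longleftrightarrow>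
     poly_fun (Inl ` {j<..n} \<union> Inr ` {j<..n}) (\<lambda>z. p (\<lambda>i. z (Inl i)) (\<lambda>i. z (Inr i)))"

text \<open>The torus T is identified with k^* via a_tau (a bi-regular isomorphism), so
  tau is parametrised by a \<noteq> 0.  phi_j^(tau)(x_(j+1..n)) is required to be a regular
  function of (tau, x) on k^* x k^n depending only on x_(j+1..n), i.e. of the form
  P(a, x_(j+1..n)) / a^m with P polynomial.\<close>
definition phi_regular :: "nat \<Rightarrow> nat \<Rightarrow> ('k \<Rightarrow> (nat \<Rightarrow> 'k) \<Rightarrow> 'k::field) \<Rightarrow> bool" where
  "phi_regular n j p \<longleftrightarrow> (\<exists>P m. poly_fun (insert None (Some ` {j<..n})) P \<and>
     (\<forall>a x. a \<noteq> 0 \<longrightarrow> p a x = P (\<lambda>v. case v of None \<Rightarrow> a | Some i \<Rightarrow> x i) / a ^ m))"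

definition act :: "nat \<Rightarrow> (nat \<Rightarrow> int) \<Rightarrow> (nat \<Rightarrow> 'k \<Rightarrow> (nat \<Rightarrow> 'k) \<Rightarrow> 'k)
    \<Rightarrow> 'k::field \<Rightarrow> (nat \<Rightarrow> 'k) \<Rightarrow> (nat \<Rightarrow> 'k)" where
  "act n e \<phi> a x = (\<lambda>j. if 1 \<le> j \<and> j < n then a powi e j * x j + \<phi> j a x
                         else if j = n then a powi e n * x n else 0)"

definition sect :: "nat \<Rightarrow> 'k::field poly \<Rightarrow> 'k \<Rightarrow> (nat \<Rightarrow> 'k)" where
  "sect n f t = (\<lambda>j. if j = n then t else if j = 1 then poly f t else 0)"

end

theory Submission
  imports Defs
begin

lemma alg_closed_infinite: "infinite (UNIV :: 'k::alg_closed_field set)"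
proof
  assume fin: "finite (UNIV::'k set)"
  define q where "q = (\<Prod>x\<in>(UNIV::'k set). [:-x,1:])"
  define p where "p = q + 1"
  have dq: "degree q = card (UNIV::'k set)"
    unfolding q_def by (subst degree_prod_eq_sum_degree) auto
  have "card (UNIV::'k set) > 0" using fin by (simp add: card_gt_0_iff)
  hence dp: "degree p = card (UNIV::'k set)" unfolding p_def
    by (subst degree_add_eq_left) (auto simp: dq)
  obtain x where "poly p x = 0" using alg_closed_imp_poly_has_root[of p] dp
    \<open>card (UNIV::'k set) > 0\<close> by auto
  moreover have "poly q x = 0" unfolding q_def poly_prod
    using fin by (intro prod_zero) auto
  ultimately show False by (simp add: p_def)
qed

lemma poly_zero_nonzero:
  fixes p :: "'k::alg_closed_field poly"
  assumes "\<And>a. a \<noteq> 0 \<Longrightarrow> poly p a = 0"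
  shows "p = 0"
proof (rule ccontr)
  assume "p \<noteq> 0"
  then have "finite {a. poly p a = 0}" by (rule poly_roots_finite)
  moreover have "UNIV - {0} \<subseteq> {a. poly p a = 0}" using assms by auto
  ultimately have "finite (UNIV - {0::'k})" by (rule finite_subset[rotated])
  hence "finite (UNIV::'k set)" by simp
  with alg_closed_infinite show False by blast
qed

lemma coeffs_zero:
  fixes w :: "nat \<Rightarrow> 'k::alg_closed_field"
  assumes "\<And>a. a \<noteq> 0 \<Longrightarrow> (\<Sum>j\<le>D. w j * a^j) = 0" "j \<le> D"
  shows "w j = 0"
proof -
  define p where "p = (\<Sum>i\<le>D. monom (w i) i)"
  have pv: "poly p a = (\<Sum>i\<le>D. w i * a^i)" for a by (simp add: p_def poly_sum poly_monom)
  have "p = 0" by (rule poly_zero_nonzero) (use assms pv in auto)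
  then have "coeff p j = 0" by simp
  moreover have "coeff p j = w j" using assms(2) by (simp add: p_def coeff_sum coeff_monom)
  ultimately show ?thesis by simp
qed

lemma pf_rep:
  assumes "poly_fun V P"
  shows "\<exists>Q :: 'k::field poly poly. \<forall>a t.
     P (\<lambda>v. case v of None \<Rightarrow> a | Some i \<Rightarrow> if i = n then t else 0) = poly (poly Q [:t:]) a"
  using assms
proof induction
  case (pf_const c) show ?case by (rule exI[of _ "[:[:c:]:]"]) simp
next
  case (pf_var v) show ?case
  proof (cases v)
    case None then show ?thesis by (intro exI[of _ "[:[:0,1:]:]"]) simp
  next
    case (Some i) then show ?thesis
      by (intro exI[of _ "if i = n then [:0,1:] else 0"]) simp
  qed
next
  case (pf_add p q)
  then obtain Q1 Q2 where "\<forall>a t. p (\<lambda>v. case v of None \<Rightarrow> a | Some i \<Rightarrow> if i = n then t else 0) = poly (poly Q1 [:t:]) a"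
    "\<forall>a t. q (\<lambda>v. case v of None \<Rightarrow> a | Some i \<Rightarrow> if i = n then t else 0) = poly (poly Q2 [:t:]) a" by blast
  then show ?case by (intro exI[of _ "Q1 + Q2"]) simp
next
  case (pf_mult p q)
  then obtain Q1 Q2 where "\<forall>a t. p (\<lambda>v. case v of None \<Rightarrow> a | Some i \<Rightarrow> if i = n then t else 0) = poly (poly Q1 [:t:]) a"
    "\<forall>a t. q (\<lambda>v. case v of None \<Rightarrow> a | Some i \<Rightarrow> if i = n then t else 0) = poly (poly Q2 [:t:]) a" by blast
  then show ?case by (intro exI[of _ "Q1 * Q2"]) simp
qed

lemma poly_poly_expand:
  fixes Q :: "'k::field poly poly"
  shows "poly (poly Q [:t:]) a = (\<Sum>l\<le>degree Q. poly (coeff Q l) a * t^l)"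
  by (subst poly_altdef[of Q]) (simp add: poly_sum poly_power)

lemma laurent_hom_zero:
  fixes c :: "'k::alg_closed_field \<Rightarrow> 'k" and R :: "'k poly" and m :: nat and E :: int
  assumes rep: "\<And>a. a \<noteq> 0 \<Longrightarrow> c a = poly R a / a^m"
  and coc: "\<And>a b. a \<noteq> 0 \<Longrightarrow> b \<noteq> 0 \<Longrightarrow> c (a*b) = a powi E * c b + c a * b powi E"
  and b: "b \<noteq> 0"
  shows "c b = 0"
proof -
  define k where "k = E + int m"
  define N where "N = nat (- k)"
  define K where "K = nat (k + int N)"
  have EK: "E + int m + int N = int K" by (simp add: K_def N_def k_def)
  define Pp where "Pp = smult (inverse (b^m)) (monom 1 N * (R \<circ>\<^sub>p [:0,b:]))
      - smult (b powi E) (monom 1 N * R) - monom (c b) K"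
  have "Pp = 0"
  proof (rule poly_zero_nonzero)
    fix a :: 'k assume a: "a \<noteq> 0"
    define X where "X = a powi E * c b + poly R a / a^m * b powi E"
    have eq: "poly R (a*b) / (a*b)^m = X"
      using coc[OF a b] rep[OF a] rep[of "a*b"] a b unfolding X_def by simp
    have e2: "poly R (a*b) = X * (a^m * b^m)" using eq a b by (simp add: divide_eq_eq power_mult_distrib)
    have pw: "a powi E * a^m * a^N = a^K"
    proof -
      have "a powi E * a^m * a^N = a powi (E + int m + int N)"
        using a by (simp add: power_int_add)
      also have "\<dots> = a^K" by (simp add: EK)
      finally show ?thesis .
    qed
    have e3: "poly R (a*b) * a^N / b^m = X * a^m * a^N"
      using b by (simp add: e2)
    have e4: "X * a^m * a^N = (a powi E * a^m * a^N) * c b + poly R a * a^N * b powi E"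
      using a unfolding X_def by (simp add: distrib_right)
    have e5: "poly R (a*b) * a^N / b^m = a^K * c b + poly R a * a^N * b powi E"
      using e3 e4 pw by simp
    have "poly Pp a = inverse (b^m) * (a^N * poly R (a*b)) - b powi E * (a^N * poly R a) - c b * a^K"
      by (simp add: Pp_def poly_pcompose poly_monom mult.commute)
    also have "\<dots> = 0" using e5 by (simp add: divide_inverse algebra_simps)
    finally show "poly Pp a = 0" .
  qed
  hence "coeff Pp K = 0" by simp
  show ?thesis
  proof (cases "k < 0")
    case True
    hence "K < N" by (simp add: K_def N_def)
    with \<open>coeff Pp K = 0\<close> show ?thesis by (simp add: Pp_def coeff_monom_mult)
  next
    case False
    hence N0: "N = 0" and KK: "int K = k" by (auto simp: K_def N_def)
    have bK: "b^K = b powi E * b^m"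
    proof -
      have "b^K = b powi (E + int m)" using KK by (simp add: k_def flip: power_int_of_nat)
      thus ?thesis using b by (simp add: power_int_add)
    qed
    have "coeff Pp K = inverse (b^m) * (b^K * coeff R K) - b powi E * coeff R K - c b"
      by (simp add: Pp_def coeff_monom_mult coeff_pcompose_linear N0)
    also have "\<dots> = - c b" using b by (simp add: bK)
    finally show ?thesis using \<open>coeff Pp K = 0\<close> by simp
  qed
qed

theorem mainTheorem8:
  fixes n :: nat
    and \<psi> :: "nat \<Rightarrow> (nat \<Rightarrow> 'k::alg_closed_field) \<Rightarrow> (nat \<Rightarrow> 'k) \<Rightarrow> 'k"
    and e1 :: "nat \<Rightarrow> 'k"
    and e :: "nat \<Rightarrow> int"
    and \<phi> :: "nat \<Rightarrow> 'k \<Rightarrow> (nat \<Rightarrow> 'k) \<Rightarrow> 'k"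
  assumes n2: "2 \<le> n"
    and psi_pol: "\<And>j. 1 \<le> j \<Longrightarrow> j < n \<Longrightarrow> psi_poly n j (\<psi> j)"
    and grp: "group (Ugrp n \<psi> e1)"
    and normal_sub: "\<And>i. i \<le> n \<Longrightarrow> Usub n i \<lhd> Ugrp n \<psi> e1"
    and phi_reg: "\<And>j. 1 \<le> j \<Longrightarrow> j < n \<Longrightarrow> phi_regular n j (\<phi> j)"
    and act_hom: "\<And>a. a \<noteq> 0 \<Longrightarrow> act n e \<phi> a \<in> hom (Ugrp n \<psi> e1) (Ugrp n \<psi> e1)"
    and act_bij: "\<And>a. a \<noteq> 0 \<Longrightarrow> bij_betw (act n e \<phi> a) (Uset n) (Uset n)"
    and act_one: "\<And>x. x \<in> Uset n \<Longrightarrow> act n e \<phi> 1 x = x"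
    and act_mult: "\<And>a b x. a \<noteq> 0 \<Longrightarrow> b \<noteq> 0 \<Longrightarrow> x \<in> Uset n \<Longrightarrow>
                     act n e \<phi> (a * b) x = act n e \<phi> a (act n e \<phi> b x)"
    and phi_zero: "\<And>a j x. a \<noteq> 0 \<Longrightarrow> 2 \<le> j \<Longrightarrow> j < n \<Longrightarrow> x \<in> Uset n \<Longrightarrow> \<phi> j a x = 0"
    and phi1: "\<exists>g. \<forall>a. a \<noteq> 0 \<longrightarrow>
                 (\<forall>x \<in> Uset n. \<phi> 1 a x = g a (x n)) \<and> (\<forall>s t. g a (s + t) = g a s + g a t)"
  shows "\<exists>f :: 'k poly.
           (\<forall>x y. poly f x + poly f y - poly f (x + y) = 0) \<and>
           (\<forall>t. sect n f t \<in> Usub n n \<and> sect n f t n = t) \<and>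
           (\<forall>a t. a \<noteq> 0 \<longrightarrow> act n e \<phi> a (sect n f t) \<in> range (sect n f))"
proof -
  obtain g where g: "\<forall>a. a \<noteq> 0 \<longrightarrow> (\<forall>x \<in> Uset n. \<phi> 1 a x = g a (x n)) \<and> (\<forall>s t. g a (s + t) = g a s + g a t)"
    using phi1 by blast
  have gphi: "\<And>a x. a \<noteq> 0 \<Longrightarrow> x \<in> Uset n \<Longrightarrow> \<phi> 1 a x = g a (x n)" using g by blast
  have gadd: "\<And>a s t. a \<noteq> 0 \<Longrightarrow> g a (s + t) = g a s + g a t" using g by blast
  define xt where "xt t = (\<lambda>i::nat. if i = n then t else (0::'k))" for t
  have xtU: "xt t \<in> Uset n" for t using n2 by (auto simp: xt_def Uset_def)
  obtain P m where Pp: "poly_fun (insert None (Some ` {1<..n})) P"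
    and Pm: "\<forall>a x. a \<noteq> 0 \<longrightarrow> \<phi> 1 a x = P (\<lambda>v. case v of None \<Rightarrow> a | Some i \<Rightarrow> x i) / a^m"
    using phi_reg[of 1] n2 unfolding phi_regular_def by auto
  obtain Q :: "'k poly poly" where
    Q: "\<forall>a t. P (\<lambda>v. case v of None \<Rightarrow> a | Some i \<Rightarrow> if i = n then t else 0) = poly (poly Q [:t:]) a"
    using pf_rep[OF Pp, where n=n] by blast
  define D where "D = degree Q"
  define c where "c l a = poly (coeff Q l) a / a^m" for l a
  have rep: "g a t = (\<Sum>l\<le>D. c l a * t^l)" if a: "a \<noteq> 0" for a t
  proof -
    have "g a t = g a (xt t n)" by (simp add: xt_def)
    also have "\<dots> = \<phi> 1 a (xt t)" using gphi[OF a xtU] by simp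
    also have "\<dots> = poly (poly Q [:t:]) a / a^m" using Pm a Q by (simp add: xt_def)
    also have "\<dots> = (\<Sum>l\<le>D. poly (coeff Q l) a * t^l) / a^m" by (simp add: poly_poly_expand D_def)
    also have "\<dots> = (\<Sum>l\<le>D. c l a * t^l)"
      by (auto simp: c_def sum_divide_distrib intro!: sum.cong)
    finally show ?thesis .
  qed
  have act1: "act n e \<phi> a y 1 = a powi e 1 * y 1 + \<phi> 1 a y" for a y using n2 by (simp add: act_def)
  have actn: "act n e \<phi> a y n = a powi e n * y n" for a y by (simp add: act_def)
  have actU: "act n e \<phi> a y \<in> Uset n" if "a \<noteq> 0" "y \<in> Uset n" for a y
    using act_bij[OF that(1)] that(2) by (rule bij_betw_apply)
  have coc: "g (a*b) t = a powi e 1 * g b t + g a (b powi e n * t)"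
    if a: "a \<noteq> 0" and b: "b \<noteq> 0" for a b t
  proof -
    have ab: "a * b \<noteq> 0" using a b by simp
    have n1: "n \<noteq> 1" using n2 by simp
    have "act n e \<phi> (a*b) (xt t) 1 = act n e \<phi> a (act n e \<phi> b (xt t)) 1"
      using act_mult[OF a b xtU] by simp
    moreover have "act n e \<phi> (a*b) (xt t) 1 = g (a*b) t"
      using act1 gphi[OF ab xtU] n1 by (simp add: xt_def)
    moreover
    have yU: "act n e \<phi> b (xt t) \<in> Uset n" using actU[OF b xtU] .
    have y1: "act n e \<phi> b (xt t) 1 = g b t"
      using act1 gphi[OF b xtU] n1 by (simp add: xt_def)
    have yn: "act n e \<phi> b (xt t) n = b powi e n * t" using actn by (simp add: xt_def)
    have "act n e \<phi> a (act n e \<phi> b (xt t)) 1 = a powi e 1 * g b t + g a (b powi e n * t)"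
      using act1 gphi[OF a yU] y1 yn by simp
    ultimately show ?thesis by simp
  qed
  have ccoc: "c l (a*b) = a powi e 1 * c l b + c l a * (b powi e n)^l"
    if a: "a \<noteq> 0" and b: "b \<noteq> 0" and l: "l \<le> D" for a b l
  proof -
    have ab: "a * b \<noteq> 0" using a b by simp
    have "(\<Sum>l\<le>D. (c l (a*b) - a powi e 1 * c l b - c l a * (b powi e n)^l) * t^l) = 0" if "t \<noteq> 0" for t
    proof -
      have "(\<Sum>l\<le>D. (c l (a*b) - a powi e 1 * c l b - c l a * (b powi e n)^l) * t^l)
          = g (a*b) t - a powi e 1 * g b t - g a (b powi e n * t)"
        unfolding rep[OF ab] rep[OF a] rep[OF b]
        by (simp add: algebra_simps sum_subtractf sum_distrib_left power_mult_distrib sum.distrib)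
      also have "\<dots> = 0" using coc[OF a b] by simp
      finally show ?thesis .
    qed
    from coeffs_zero[OF this l] show ?thesis by (simp add: algebra_simps)
  qed
  define B where "B l a = (a powi e n)^l - a powi e 1" for l and a :: 'k
  have key: "c l a * B l b = c l b * B l a"
    if a: "a \<noteq> 0" and b: "b \<noteq> 0" and l: "l \<le> D" for a b l
  proof -
    have "c l a * B l b - c l b * B l a = c l (b*a) - c l (a*b)"
      using ccoc[OF a b l] ccoc[OF b a l] by (simp add: B_def algebra_simps)
    also have "\<dots> = 0" by (simp add: mult.commute)
    finally show ?thesis by simp
  qed
  have dex: "\<forall>l. \<exists>d. l \<le> D \<longrightarrow> ((\<forall>a. a \<noteq> 0 \<longrightarrow> c l a = d * B l a) \<and> (d \<noteq> 0 \<longrightarrow> (\<exists>a. a \<noteq> 0 \<and> B l a \<noteq> 0)))"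
  proof
    fix l
    show "\<exists>d. l \<le> D \<longrightarrow> ((\<forall>a. a \<noteq> 0 \<longrightarrow> c l a = d * B l a) \<and> (d \<noteq> 0 \<longrightarrow> (\<exists>a. a \<noteq> 0 \<and> B l a \<noteq> 0)))"
    proof (cases "l \<le> D")
      case False thus ?thesis by blast
    next
      case l: True
      show ?thesis
      proof (cases "\<exists>b. b \<noteq> 0 \<and> B l b \<noteq> 0")
        case True
        then obtain b0 where b0: "b0 \<noteq> 0" "B l b0 \<noteq> 0" by blast
        have "\<forall>a. a \<noteq> 0 \<longrightarrow> c l a = c l b0 / B l b0 * B l a"
        proof (intro allI impI)
          fix a :: 'k assume a: "a \<noteq> 0"
          show "c l a = c l b0 / B l b0 * B l a" using key[OF a b0(1) l] b0(2)
            by (simp add: field_simps)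
        qed
        thus ?thesis using b0 by blast
      next
        case False
        hence Bz: "(b powi e n)^l = b powi e 1" if "b \<noteq> 0" for b :: 'k using that by (auto simp: B_def)
        have "c l a = 0" if a: "a \<noteq> 0" for a
        proof (rule laurent_hom_zero[where c="c l" and R="coeff Q l" and m=m and E="e 1"])
          show "c l x = poly (coeff Q l) x / x^m" if "x \<noteq> 0" for x by (simp add: c_def)
          show "c l (x*y) = x powi e 1 * c l y + c l x * y powi e 1" if "x \<noteq> 0" "y \<noteq> 0" for x y
            using ccoc[OF that l] Bz[OF that(2)] by simp
          show "a \<noteq> 0" by fact
        qed
        thus ?thesis by (intro exI[of _ 0]) auto
      qed
    qed
  qed
  then obtain d where dd: "\<And>l. l \<le> D \<Longrightarrow> (\<forall>a. a \<noteq> 0 \<longrightarrow> c l a = d l * B l a) \<and> (d l \<noteq> 0 \<longrightarrow> (\<exists>a. a \<noteq> 0 \<and> B l a \<noteq> 0))"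
    by (metis choice)
  have d: "c l a = d l * B l a" if "l \<le> D" "a \<noteq> 0" for l a using dd[OF that(1)] that(2) by blast
  have dnz: "\<exists>a. a \<noteq> 0 \<and> B l a \<noteq> 0" if "l \<le> D" "d l \<noteq> 0" for l using dd[OF that(1)] that(2) by blast
  define f where "f = (\<Sum>l\<le>D. monom (d l) l)"
  have pf: "poly f t = (\<Sum>l\<le>D. d l * t^l)" for t by (simp add: f_def poly_sum poly_monom)
  have gform: "g a t = (\<Sum>l\<le>D. d l * B l a * t^l)" if a: "a \<noteq> 0" for a t
    unfolding rep[OF a] by (intro sum.cong) (auto simp: d a)
  have addf: "poly f x + poly f y - poly f (x + y) = 0" for x y
  proof -
    have each: "d l * (x^l + y^l - (x+y)^l) = 0" if l: "l \<le> D" for l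
    proof (cases "d l = 0")
      case True thus ?thesis by simp
    next
      case False
      then obtain a where a: "a \<noteq> 0" "B l a \<noteq> 0" using dnz[OF l] by blast
      define z where "z = x + y"
      have "(\<Sum>j\<le>D. (d j * B j a * (x^j + y^j - z^j)) * s^j) = 0" if "s \<noteq> 0" for s
      proof -
        have "(\<Sum>j\<le>D. (d j * B j a * (x^j + y^j - z^j)) * s^j)
            = g a (s*x) + g a (s*y) - g a (s*z)"
          unfolding gform[OF a(1)]
          by (simp add: algebra_simps sum_subtractf sum.distrib power_mult_distrib)
        also have "\<dots> = 0" using gadd[OF a(1), of "s*x" "s*y"] by (simp add: distrib_left z_def)
        finally show ?thesis .
      qed
      from coeffs_zero[OF this l] have "d l * B l a * (x^l + y^l - (x+y)^l) = 0" by (simp add: z_def)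
      with a(2) show ?thesis by simp
    qed
    have "poly f x + poly f y - poly f (x + y) = (\<Sum>l\<le>D. d l * (x^l + y^l - (x+y)^l))"
      by (simp add: pf algebra_simps sum.distrib sum_subtractf)
    also have "\<dots> = 0" using each by (intro sum.neutral) simp
    finally show ?thesis .
  qed
  have sectU: "sect n f t \<in> Usub n n \<and> sect n f t n = t" for t
    using n2 by (auto simp: sect_def Usub_def Uset_def)
  have actsect: "act n e \<phi> a (sect n f t) = sect n f (a powi e n * t)" if a: "a \<noteq> 0" for a t
  proof
    fix j
    have sU: "sect n f t \<in> Uset n" using sectU[of t] by (simp add: Usub_def)
    have n1: "n \<noteq> 1" using n2 by simp
    consider "j = 1" | "2 \<le> j \<and> j < n" | "j = n" | "j = 0 \<or> n < j" by linarith
    then show "act n e \<phi> a (sect n f t) j = sect n f (a powi e n * t) j"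
    proof cases
      case 1
      have "(\<Sum>l\<le>D. d l * (a powi e n * t)^l) = (\<Sum>l\<le>D. a powi e 1 * (d l * t^l) + d l * B l a * t^l)"
        by (intro sum.cong) (auto simp: B_def power_mult_distrib algebra_simps)
      also have "\<dots> = a powi e 1 * poly f t + g a t"
        by (simp add: sum.distrib sum_distrib_left pf gform[OF a])
      finally have "poly f (a powi e n * t) = a powi e 1 * poly f t + g a t" by (simp add: pf)
      then show ?thesis using 1 act1 gphi[OF a sU] n1 by (simp add: sect_def)
    next
      case 2
      then show ?thesis using phi_zero[OF a _ _ sU, of j] by (simp add: act_def sect_def)
    next
      case 3
      then show ?thesis using n1 by (simp add: act_def sect_def)
    next
      case 4
      then show ?thesis using n2 by (auto simp: act_def sect_def)
    qed
  qed
  show ?thesis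
  proof (intro exI[of _ f] conjI allI impI)
    show "poly f x + poly f y - poly f (x + y) = 0" for x y by (rule addf)
    show "sect n f t \<in> Usub n n" for t using sectU by blast
    show "sect n f t n = t" for t using sectU by blast
    show "act n e \<phi> a (sect n f t) \<in> range (sect n f)" if "a \<noteq> 0" for a t
      using actsect[OF that] by simp
  qed
qed

end
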